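(* Let $w$ be an infinite word with $\delta(w)<\gamma$, where $\gamma=(1+\sqrt5)/2$. Then $w$ is periodic.
   Context: Words are over an arbitrary alphabet; infinite words are right-infinite. The empty word counts as a palindromic prefix. If $w$ has infinitely many palindromic prefixes, let $(n_i)_{i\ge1}$ be the increasing sequence of their lengths ($n_1=0$) and $\delta(w)=\limsup n_{i+1}/n_i$; otherwise $\delta(w)=\infty$. *)

theory Defs
  imports Complex_Main "HOL-Library.Infinite_Set" "HOL-Library.Extended_Real" "HOL-Library.Liminf_Limsup"
begin

definition pal_prefix :: "(nat \<Rightarrow> 'a) \<Rightarrow> nat \<Rightarrow> bool" where
  "pal_prefix w n \<longleftrightarrow> (\<forall>i<n. w i = w (n - 1 - i))"

definition pal_lengths :: "(nat \<Rightarrow> 'a) \<Rightarrow> nat set" where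
  "pal_lengths w = {n. pal_prefix w n}"

text \<open>n_(i+1) = enumerate (pal_lengths w) i (0-based), so n_1 = 0.\<close>

definition delta :: "(nat \<Rightarrow> 'a) \<Rightarrow> ereal" where
  "delta w = (if infinite (pal_lengths w)
     then limsup (\<lambda>i. ereal (real (enumerate (pal_lengths w) (Suc i))
                               / real (enumerate (pal_lengths w) i)))
     else \<infinity>)"

definition periodic_word :: "(nat \<Rightarrow> 'a) \<Rightarrow> bool" where
  "periodic_word w \<longleftrightarrow> (\<exists>p>0. \<forall>i. w (i + p) = w i)"

end

theory Submission
  imports Defs
begin
definition per :: "(nat \<Rightarrow> 'a) \<Rightarrow> nat \<Rightarrow> nat \<Rightarrow> bool" where
  "per w N q \<longleftrightarrow> (\<forall>i. q \<le> i \<and> i < N \<longrightarrow> w i = w (i - q))"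

lemma palD: "pal_prefix w n \<Longrightarrow> i < n \<Longrightarrow> w i = w (n - 1 - i)"
  unfolding pal_prefix_def by blast

lemma perD: "per w n q \<Longrightarrow> q \<le> i \<Longrightarrow> i < n \<Longrightarrow> w i = w (i - q)"
  unfolding per_def by blast

lemma pal_border:
  assumes "pal_prefix w N" "pal_prefix w L" "L \<le> N"
  shows "per w N (N - L)"
  unfolding per_def
proof (intro allI impI)
  fix i assume i: "N - L \<le> i \<and> i < N"
  have "w i = w (N - 1 - i)" using palD[OF assms(1)] i by blast
  also have "\<dots> = w (L - 1 - (N - 1 - i))"
  proof -
    have "N - 1 - i < L" using i assms(3) by linarith
    then show ?thesis using palD[OF assms(2)] by blast
  qed
  also have "L - 1 - (N - 1 - i) = i - (N - L)" using i assms(3) by linarith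
  finally show "w i = w (i - (N - L))" .
qed

lemma per_combine:
  assumes "per w N q" "per w M p" "p + q \<le> M" "M \<le> N" "0 < q"
  shows "per w N p"
  unfolding per_def
proof (intro allI)
  fix i show "p \<le> i \<and> i < N \<longrightarrow> w i = w (i - p)"
  proof (induction i rule: less_induct)
    case (less i)
    show ?case
    proof
      assume i: "p \<le> i \<and> i < N"
      show "w i = w (i - p)"
      proof (cases "i < M")
        case True then show ?thesis using perD[OF assms(2)] i by blast
      next
        case False
        then have qi: "q \<le> i" using assms by linarith
        show ?thesis
        proof -
          have q: "q \<noteq> 0" using assms(5) by simp
          have a: "w i = w (i - q)" using perD[OF assms(1)] i qi by blast
          have b: "w (i - p) = w (i - p - q)" using perD[OF assms(1), of "i - p"] i False assms(3)
            by linarith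
          have c: "w (i - q) = w (i - q - p)" using less[of "i - q"] q i False assms(3) by auto
          show ?thesis using a b c by (metis diff_commute)
        qed
      qed
    qed
  qed
qed

lemma pal_shift:
  assumes "pal_prefix w N" "per w N p" "p \<le> N"
  shows "pal_prefix w (N - p)"
  unfolding pal_prefix_def
proof (intro allI impI)
  fix i assume i: "i < N - p"
  have "w (N - p - 1 - i) = w (N - 1 - (N - p - 1 - i))"
    using palD[OF assms(1), of "N - p - 1 - i"] i by linarith
  also have "N - 1 - (N - p - 1 - i) = p + i" using i by linarith
  also have "w (p + i) = w i" using perD[OF assms(2), of "p + i"] i by simp
  finally show "w i = w (N - p - 1 - i)" by simp
qed

lemma step_eq:
  assumes pL: "pal_prefix w L" and pM: "pal_prefix w M" and pN: "pal_prefix w N"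
    and LM: "L < M" and MN: "M < N"
    and g1: "\<And>n. L < n \<Longrightarrow> n < M \<Longrightarrow> \<not> pal_prefix w n"
    and g2: "\<And>n. M < n \<Longrightarrow> n < N \<Longrightarrow> \<not> pal_prefix w n"
    and s: "N - L \<le> M"
  shows "N - M = M - L"
proof -
  have pq: "per w N (N - M)" using pal_border[OF pN pM] MN by simp
  have pp: "per w M (M - L)" using pal_border[OF pM pL] LM by simp
  have "per w N (M - L)" using per_combine[OF pq pp] s LM MN by simp
  then have P: "pal_prefix w (N - (M - L))" using pal_shift[OF pN] LM MN by (meson diff_le_self le_trans less_imp_le)
  show ?thesis
  proof (rule ccontr)
    assume ne: "N - M \<noteq> M - L"
    show False
    proof (cases "N - M < M - L")
      case True
      then show False using g1[of "N - (M - L)"] P LM MN s by linarith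
    next
      case False
      then show False using g2[of "N - (M - L)"] P LM MN s ne by linarith
    qed
  qed
qed
lemma golden: fixes c :: real assumes "1 < c" "c < (1 + sqrt 5) / 2" shows "c * c - c < 1"
proof -
  have s: "sqrt 5 * sqrt 5 = 5" by simp
  have "(c - (1 + sqrt 5) / 2) * (c - (1 - sqrt 5) / 2) < 0"
  proof (rule mult_neg_pos)
    show "c - (1 + sqrt 5) / 2 < 0" using assms by simp
    have "sqrt 5 > 1" by simp
    then show "0 < c - (1 - sqrt 5) / 2" using assms by simp
  qed
  then show ?thesis using s by (simp add: algebra_simps field_simps)
qed

theorem corollary1p5:
  fixes w :: "nat \<Rightarrow> 'a"
  assumes "delta w < ereal ((1 + sqrt 5) / 2)"
  shows "periodic_word w"
proof -
  define S where "S = pal_lengths w"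
  have inf: "infinite S"
    using assms unfolding delta_def S_def by (cases "infinite (pal_lengths w)") auto
  define e where "e = enumerate S"
  have inS: "pal_prefix w (e i)" for i
    using enumerate_in_set[OF inf] unfolding e_def S_def pal_lengths_def by auto
  have mono: "e m < e n \<longleftrightarrow> m < n" for m n using inf unfolding e_def by simp
  have ge: "n \<le> e n" for n using le_enumerate[OF inf] unfolding e_def by simp
  have gap: "\<not> pal_prefix w n" if "e i < n" "n < e (Suc i)" for i n
  proof
    assume "pal_prefix w n"
    then have "n \<in> S" unfolding S_def pal_lengths_def by simp
    then obtain k where "e k = n" using enumerate_Ex[OF inf] unfolding e_def by blast
    then show False using that mono[of i k] mono[of k "Suc i"] by auto
  qed
  define f where "f = (\<lambda>i. ereal (real (e (Suc i)) / real (e i)))"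
  have dl: "delta w = limsup f" using inf unfolding delta_def f_def e_def S_def by simp
  obtain x where x: "delta w < x" "x < ereal ((1 + sqrt 5) / 2)"
    using dense[OF assms] by blast
  obtain c where c: "x = ereal c" using x by (cases x) auto
  have "eventually (\<lambda>i. f i < ereal c) sequentially"
    using Limsup_lessD[of sequentially f "ereal c"] x c dl by simp
  then obtain i0 where i0: "\<And>i. i \<ge> i0 \<Longrightarrow> real (e (Suc i)) / real (e i) < c"
    unfolding f_def eventually_sequentially by auto
  define i1 where "i1 = Suc i0"
  have pos: "0 < e i" if "i \<ge> i1" for i using mono[of 0 i] that unfolding i1_def by auto
  have lin: "real (e (Suc i)) < c * real (e i)" if "i \<ge> i1" for i
    using i0[of i] pos[OF that] that unfolding i1_def by (simp add: divide_less_eq)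
  have c1: "1 < c"
  proof -
    have "real (e i1) < real (e (Suc i1))" using mono by simp
    then have "real (e i1) < c * real (e i1)" using lin[of i1] by simp
    then show ?thesis using pos[of i1] by simp
  qed
  have c2: "c * c - c < 1" using golden c1 x c by simp
  have key: "e (Suc (Suc i)) - e i \<le> e (Suc i)" if "i \<ge> i1" for i
  proof -
    have a: "real (e (Suc (Suc i))) < c * real (e (Suc i))" using lin that by simp
    have b: "(c - 1) * real (e (Suc i)) \<le> (c - 1) * (c * real (e i))"
      using lin[OF that] c1 by (intro mult_left_mono) auto
    have d: "(c * c - c) * real (e i) \<le> real (e i)" using mult_right_mono[of "c*c-c" 1 "real (e i)"] c2 by simp
    have "real (e (Suc (Suc i))) \<le> real (e (Suc i)) + real (e i)"
      using a b d by (simp add: algebra_simps)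
    then show ?thesis by simp
  qed
  have eq: "e (Suc (Suc i)) - e (Suc i) = e (Suc i) - e i" if "i \<ge> i1" for i
    by (rule step_eq[OF inS inS inS]) (use mono gap key[OF that] in auto)
  define p where "p = e (Suc i1) - e i1"
  have pk: "e (Suc (i1 + k)) - e (i1 + k) = p" for k
  proof (induction k)
    case 0 then show ?case unfolding p_def by simp
  next
    case (Suc k) then show ?case using eq[of "i1 + k"] by simp
  qed
  have pp: "p > 0" unfolding p_def using mono[of i1 "Suc i1"] by simp
  have perk: "per w (e (Suc (i1 + k))) p" for k
    using pal_border[OF inS[of "Suc (i1 + k)"] inS[of "i1 + k"]] mono[of "i1 + k" "Suc (i1 + k)"] pk[of k]
    by simp
  show ?thesis unfolding periodic_word_def
  proof (intro exI conjI allI)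
    show "p > 0" by (rule pp)
    fix i
    have "i + p < e (Suc (i1 + (i + p)))" using ge[of "Suc (i1 + (i + p))"] by simp
    then show "w (i + p) = w i" using perk[of "i + p"] unfolding per_def by auto
  qed
qed

end
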